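(* For $1\le i\le k$ let $G_i$ be an $r_i$-regular graph with $n_i$ vertices that admits a balanced labelling. Suppose $r_i\le n_j$ for all $1\le i,j\le k$, and that $r=\sum_{i=1}^k r_i$ is coprime to $n_1n_2\cdots n_k$. Then $G_1\Box\cdots\Box G_k$ is $\mathbb{Z}_{n_1\cdots n_k}$-distance antimagic.
   Context: For an $r$-regular graph $G$ with $n$ vertices, a balanced labelling is a bijection $f:V(G)\to\mathbb{Z}_n$ such that $\sum_{y\in N(x)} f(y)\equiv r f(x)\pmod n$ for every vertex $x$ ($N(x)$ the open neighbourhood). The Cartesian product $G_1\Box\cdots\Box G_k$ has vertex set $V(G_1)\times\cdots\times V(G_k)$, with two tuples adjacent iff they differ in exactly one coordinate $i$ and are adjacent there in $G_i$. For a graph $G$ with $n$ vertices, a $\mathbb{Z}_n$-distance antimagic labelling is a bijection $f:V(G)\to\mathbb{Z}_n$ such that the weights $w_f(x)=\sum_{y\in N(x)} f(y)$ (mod $n$) are pairwise distinct; $G$ is $\mathbb{Z}_n$-distance antimagic if such a labelling exists. *)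

theory Defs
  imports Main "HOL-Library.FuncSet"
begin

definition simple_graph :: "'a set \<Rightarrow> ('a \<Rightarrow> 'a \<Rightarrow> bool) \<Rightarrow> bool" where
  "simple_graph V E \<longleftrightarrow> finite V \<and> V \<noteq> {} \<and>
     (\<forall>x y. E x y \<longrightarrow> x \<in> V \<and> y \<in> V) \<and>
     (\<forall>x y. E x y \<longrightarrow> E y x) \<and> (\<forall>x. \<not> E x x)"

definition nbhd :: "'a set \<Rightarrow> ('a \<Rightarrow> 'a \<Rightarrow> bool) \<Rightarrow> 'a \<Rightarrow> 'a set" where
  "nbhd V E x = {y \<in> V. E x y}"

definition regular :: "'a set \<Rightarrow> ('a \<Rightarrow> 'a \<Rightarrow> bool) \<Rightarrow> nat \<Rightarrow> bool" where
  "regular V E r \<longleftrightarrow> (\<forall>x\<in>V. card (nbhd V E x) = r)"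

(* Elements of Z_n are represented by {0..<n}; congruences mod n. *)
definition balanced_labelling ::
  "'a set \<Rightarrow> ('a \<Rightarrow> 'a \<Rightarrow> bool) \<Rightarrow> nat \<Rightarrow> ('a \<Rightarrow> nat) \<Rightarrow> bool" where
  "balanced_labelling V E r f \<longleftrightarrow> bij_betw f V {0..<card V} \<and>
     (\<forall>x\<in>V. (\<Sum>y\<in>nbhd V E x. f y) mod card V = (r * f x) mod card V)"

definition has_balanced_labelling :: "'a set \<Rightarrow> ('a \<Rightarrow> 'a \<Rightarrow> bool) \<Rightarrow> nat \<Rightarrow> bool" where
  "has_balanced_labelling V E r \<longleftrightarrow> (\<exists>f. balanced_labelling V E r f)"

definition distance_antimagic_labelling ::
  "'a set \<Rightarrow> ('a \<Rightarrow> 'a \<Rightarrow> bool) \<Rightarrow> ('a \<Rightarrow> nat) \<Rightarrow> bool" where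
  "distance_antimagic_labelling V E f \<longleftrightarrow> bij_betw f V {0..<card V} \<and>
     inj_on (\<lambda>x. (\<Sum>y\<in>nbhd V E x. f y) mod card V) V"

definition Zn_distance_antimagic :: "'a set \<Rightarrow> ('a \<Rightarrow> 'a \<Rightarrow> bool) \<Rightarrow> bool" where
  "Zn_distance_antimagic V E \<longleftrightarrow> (\<exists>f. distance_antimagic_labelling V E f)"

definition cart_prod_V :: "nat \<Rightarrow> (nat \<Rightarrow> 'a set) \<Rightarrow> (nat \<Rightarrow> 'a) set" where
  "cart_prod_V k V = PiE {..<k} V"

definition cart_prod_E ::
  "nat \<Rightarrow> (nat \<Rightarrow> 'a \<Rightarrow> 'a \<Rightarrow> bool) \<Rightarrow> (nat \<Rightarrow> 'a) \<Rightarrow> (nat \<Rightarrow> 'a) \<Rightarrow> bool" where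
  "cart_prod_E k E x y \<longleftrightarrow> (\<exists>i<k. E i (x i) (y i) \<and> (\<forall>j. j \<noteq> i \<longrightarrow> x j = y j))"

end

theory Submission
  imports Defs
begin

lemma digits:
  fixes n :: "nat \<Rightarrow> nat" and h h' :: "nat \<Rightarrow> int"
  assumes "\<forall>i<K. n i > 0"
    and "\<forall>i<K. int (n i) dvd h i - h' i \<longrightarrow> h i = h' i"
    and "int (\<Prod>j<K. n j) dvd (\<Sum>i<K. int (\<Prod>j<i. n j) * h i) - (\<Sum>i<K. int (\<Prod>j<i. n j) * h' i)"
  shows "\<forall>i<K. int (n i) dvd h i - h' i"
  using assms
proof (induction K)
  case 0 then show ?case by simp
next
  case (Suc K)
  define M where "M = int (\<Prod>j<K. n j)"
  have Mpos: "M > 0" using Suc.prems(1) unfolding M_def of_nat_0_less_iff by (auto intro!: prod_pos)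
  define A where "A = (\<Sum>i<K. int (\<Prod>j<i. n j) * h i)"
  define B where "B = (\<Sum>i<K. int (\<Prod>j<i. n j) * h' i)"
  have c: "M * int (n K) dvd (A - B) + M * (h K - h' K)"
    using Suc.prems(3) unfolding M_def A_def B_def by (simp add: algebra_simps)
  have "M dvd (A - B) + M * (h K - h' K)"
    using c dvd_mult_left by blast
  then have "M dvd A - B" by (simp add: dvd_add_left_iff)
  then have IH: "\<forall>i<K. int (n i) dvd h i - h' i"
    using Suc.IH Suc.prems(1,2) unfolding M_def A_def B_def by auto
  then have "\<forall>i<K. h i = h' i" using Suc.prems(2) by auto
  then have "A = B" unfolding A_def B_def by (auto intro: sum.cong)
  then have "M * int (n K) dvd M * (h K - h' K)" using c by simp
  then have "int (n K) dvd h K - h' K" using Mpos by simp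
  with IH show ?case using less_Suc_eq by auto
qed

lemma digit_bound:
  fixes n a :: "nat \<Rightarrow> nat"
  assumes "\<forall>i<K. a i < n i"
  shows "(\<Sum>i<K. a i * (\<Prod>j<i. n j)) < (\<Prod>j<K. n j)"
  using assms
proof (induction K)
  case 0 then show ?case by simp
next
  case (Suc K)
  define M where "M = (\<Prod>j<K. n j)"
  have IH: "(\<Sum>i<K. a i * (\<Prod>j<i. n j)) < M" using Suc unfolding M_def by auto
  have "a K + 1 \<le> n K" using Suc.prems by auto
  then have "(a K + 1) * M \<le> n K * M" by (rule mult_right_mono) simp
  then show ?case using IH unfolding M_def by (simp add: algebra_simps)
qed

lemma small_eq:
  fixes a b :: nat and n :: nat
  assumes "a < n" "b < n" "int n dvd int a - int b"
  shows "a = b"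
proof -
  have "int a mod int n = int b mod int n" using assms(3) by (simp add: mod_eq_dvd_iff)
  then show ?thesis using assms(1,2) by simp
qed


theorem mainTheorem12:
  fixes k :: nat and V :: "nat \<Rightarrow> 'a set" and E :: "nat \<Rightarrow> 'a \<Rightarrow> 'a \<Rightarrow> bool"
    and r :: "nat \<Rightarrow> nat"
  assumes "k \<ge> 1"
    and graphs: "\<And>i. i < k \<Longrightarrow> simple_graph (V i) (E i)"
    and reg: "\<And>i. i < k \<Longrightarrow> regular (V i) (E i) (r i)"
    and bal: "\<And>i. i < k \<Longrightarrow> has_balanced_labelling (V i) (E i) (r i)"
    and le: "\<And>i j. i < k \<Longrightarrow> j < k \<Longrightarrow> r i \<le> card (V j)"
    and cop: "coprime (\<Sum>i<k. r i) (\<Prod>i<k. card (V i))"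
  shows "Zn_distance_antimagic (cart_prod_V k V) (cart_prod_E k E)"
proof -
  have "\<forall>i<k. \<exists>g. balanced_labelling (V i) (E i) (r i) g"
    using bal unfolding has_balanced_labelling_def by blast
  then obtain f where f: "\<And>i. i < k \<Longrightarrow> balanced_labelling (V i) (E i) (r i) (f i)"
    by metis
  define n where "n i = card (V i)" for i
  define M where "M i = (\<Prod>j<i. n j)" for i
  define F where "F x = (\<Sum>i<k. f i (x i) * M i)" for x
  define P where "P = cart_prod_V k V"
  define CE where "CE = cart_prod_E k E"
  define R where "R = (\<Sum>i<k. r i)"
  define S where "S i v = (\<Sum>y\<in>nbhd (V i) (E i) v. f i y)" for i v
  define h where "h i v = int R * int (f i v) + int (S i v) - int (r i) * int (f i v)" for i v
  have finV: "finite (V i)" and npos: "n i > 0" if "i < k" for i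
    using graphs[OF that] unfolding simple_graph_def n_def by (auto simp: card_gt_0_iff)
  have fbij: "bij_betw (f i) (V i) {0..<n i}" if "i < k" for i
    using f[OF that] unfolding balanced_labelling_def n_def by auto
  have flt: "f i v < n i" if "i < k" "v \<in> V i" for i v
    using bij_betwE[OF fbij[OF that(1)]] that(2) by auto
  have finj: "inj_on (f i) (V i)" if "i < k" for i
    using fbij[OF that] bij_betw_def by blast
  have cardP: "card P = M k"
    unfolding P_def cart_prod_V_def M_def n_def by (simp add: card_PiE)
  have finP: "finite P"
    unfolding P_def cart_prod_V_def using finV by (auto intro: finite_PiE)
  have Pi: "x i \<in> V i" if "x \<in> P" "i < k" for x i
    using that unfolding P_def cart_prod_V_def by auto
  have coord: "x = y" if xy: "x \<in> P" "y \<in> P"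
      and d: "\<And>i. i < k \<Longrightarrow> int (n i) dvd int (f i (x i)) - int (f i (y i))" for x y
  proof -
    have "x i = y i" if "i < k" for i
    proof -
      have "f i (x i) = f i (y i)"
        using small_eq[OF flt[OF that Pi[OF xy(1) that]] flt[OF that Pi[OF xy(2) that]] d[OF that]] .
      then show ?thesis using finj[OF that] Pi[OF xy(1) that] Pi[OF xy(2) that]
        by (auto dest: inj_onD)
    qed
    then show ?thesis using xy unfolding P_def cart_prod_V_def by (auto intro: PiE_ext)
  qed
  have Finj: "inj_on F P"
  proof (rule inj_onI)
    fix x y assume xy: "x \<in> P" "y \<in> P" "F x = F y"
    have "\<forall>i<k. int (n i) dvd int (f i (x i)) - int (f i (y i))"
    proof (rule digits)
      show "\<forall>i<k. 0 < n i" using npos by auto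
      show "\<forall>i<k. int (n i) dvd int (f i (x i)) - int (f i (y i)) \<longrightarrow> int (f i (x i)) = int (f i (y i))"
      proof (intro allI impI)
        fix i assume i: "i < k" and a: "int (n i) dvd int (f i (x i)) - int (f i (y i))"
        show "int (f i (x i)) = int (f i (y i))"
          using small_eq[OF flt[OF i Pi[OF xy(1) i]] flt[OF i Pi[OF xy(2) i]] a] by simp
      qed
      have "(\<Sum>i<k. int (\<Prod>j<i. n j) * int (f i (x i))) = int (F x)"
        unfolding F_def M_def by (simp add: mult.commute)
      moreover have "(\<Sum>i<k. int (\<Prod>j<i. n j) * int (f i (y i))) = int (F y)"
        unfolding F_def M_def by (simp add: mult.commute)
      ultimately show "int (\<Prod>j<k. n j) dvd (\<Sum>i<k. int (\<Prod>j<i. n j) * int (f i (x i))) - (\<Sum>i<k. int (\<Prod>j<i. n j) * int (f i (y i)))"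
        using xy by simp
    qed
    then show "x = y" using coord xy by auto
  qed
  have Flt: "F x < M k" if "x \<in> P" for x
    unfolding F_def M_def by (rule digit_bound) (use flt Pi that in auto)
  have Fbij: "bij_betw F P {0..<card P}"
  proof -
    have sub: "F ` P \<subseteq> {0..<card P}" using Flt cardP by auto
    have "card (F ` P) = card {0..<card P}" using card_image[OF Finj] by simp
    then have "F ` P = {0..<card P}" using card_subset_eq[OF _ sub] by simp
    then show ?thesis using Finj bij_betw_def by blast
  qed
  have nb: "nbhd P CE x = (\<Union>i\<in>{..<k}. (\<lambda>v. x(i:=v)) ` nbhd (V i) (E i) (x i))"
    if x: "x \<in> P" for x
  proof (rule set_eqI)
    fix y
    show "y \<in> nbhd P CE x \<longleftrightarrow> y \<in> (\<Union>i\<in>{..<k}. (\<lambda>v. x(i:=v)) ` nbhd (V i) (E i) (x i))"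
    proof
      assume "y \<in> nbhd P CE x"
      then obtain i where i: "i < k" "E i (x i) (y i)" "\<forall>j. j \<noteq> i \<longrightarrow> x j = y j" "y \<in> P"
        unfolding nbhd_def CE_def cart_prod_E_def by auto
      have "y = x(i := y i)" using i by auto
      moreover have "y i \<in> nbhd (V i) (E i) (x i)" using i Pi unfolding nbhd_def by auto
      ultimately show "y \<in> (\<Union>i\<in>{..<k}. (\<lambda>v. x(i:=v)) ` nbhd (V i) (E i) (x i))"
        using i by blast
    next
      assume "y \<in> (\<Union>i\<in>{..<k}. (\<lambda>v. x(i:=v)) ` nbhd (V i) (E i) (x i))"
      then obtain i v where i: "i < k" "v \<in> V i" "E i (x i) v" "y = x(i:=v)"
        unfolding nbhd_def by auto
      have "y \<in> P" using x i unfolding P_def cart_prod_V_def by (auto simp: PiE_iff extensional_def)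
      moreover have "CE x y" unfolding CE_def cart_prod_E_def using i by auto
      ultimately show "y \<in> nbhd P CE x" unfolding nbhd_def by auto
    qed
  qed
  have finN: "finite (nbhd (V i) (E i) v)" if "i < k" for i v
    using finV[OF that] unfolding nbhd_def by auto
  have cardN: "card (nbhd (V i) (E i) v) = r i" if "i < k" "v \<in> V i" for i v
    using reg[OF that(1)] that(2) unfolding regular_def by auto
  have Fupd: "int (F (x(i:=v))) = int (F x) + int (M i) * (int (f i v) - int (f i (x i)))"
    if "i < k" for x i v
  proof -
    have "int (F (x(i:=v))) - int (F x) = (\<Sum>j<k. int (f j ((x(i:=v)) j)) * int (M j) - int (f j (x j)) * int (M j))"
      unfolding F_def by (simp add: sum_subtractf)
    also have "\<dots> = (\<Sum>j<k. if j = i then int (M i) * (int (f i v) - int (f i (x i))) else 0)"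
      by (rule sum.cong) (auto simp: algebra_simps)
    also have "\<dots> = int (M i) * (int (f i v) - int (f i (x i)))" using that by simp
    finally show ?thesis by simp
  qed
  have W: "int (\<Sum>y\<in>nbhd P CE x. F y) = (\<Sum>i<k. int (M i) * h i (x i))" if x: "x \<in> P" for x
  proof -
    have disj: "\<forall>i\<in>{..<k}. \<forall>j\<in>{..<k}. i \<noteq> j \<longrightarrow>
        (\<lambda>v. x(i:=v)) ` nbhd (V i) (E i) (x i) \<inter> (\<lambda>v. x(j:=v)) ` nbhd (V j) (E j) (x j) = {}"
    proof (intro ballI impI)
      fix i j assume ij: "i \<in> {..<k}" "j \<in> {..<k}" "i \<noteq> j"
      have irr: "\<not> E i a a" for a using graphs[of i] ij unfolding simple_graph_def by auto
      show "(\<lambda>v. x(i:=v)) ` nbhd (V i) (E i) (x i) \<inter> (\<lambda>v. x(j:=v)) ` nbhd (V j) (E j) (x j) = {}"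
      proof (rule ccontr)
        assume "\<not> ?thesis"
        then obtain v w where vw: "E i (x i) v" "x(i:=v) = x(j:=w)"
          unfolding nbhd_def by auto
        have "v = x i" using fun_cong[OF vw(2), of i] ij by simp
        then show False using vw irr by simp
      qed
    qed
    have "(\<Sum>y\<in>nbhd P CE x. F y) = (\<Sum>i<k. \<Sum>y\<in>(\<lambda>v. x(i:=v)) ` nbhd (V i) (E i) (x i). F y)"
      unfolding nb[OF x] by (rule sum.UNION_disjoint) (use finN disj in auto)
    also have "\<dots> = (\<Sum>i<k. \<Sum>v\<in>nbhd (V i) (E i) (x i). F (x(i:=v)))"
    proof (rule sum.cong[OF refl])
      fix i
      have "inj_on (\<lambda>v. x(i:=v)) (nbhd (V i) (E i) (x i))"
        by (rule inj_onI) (metis fun_upd_same)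
      then show "(\<Sum>y\<in>(\<lambda>v. x(i:=v)) ` nbhd (V i) (E i) (x i). F y) = (\<Sum>v\<in>nbhd (V i) (E i) (x i). F (x(i:=v)))"
        by (simp add: sum.reindex)
    qed
    finally have "int (\<Sum>y\<in>nbhd P CE x. F y) = (\<Sum>i<k. \<Sum>v\<in>nbhd (V i) (E i) (x i). int (F (x(i:=v))))"
      by simp
    also have "\<dots> = (\<Sum>i<k. int (r i) * int (F x) + int (M i) * (int (S i (x i)) - int (r i) * int (f i (x i))))"
    proof (rule sum.cong[OF refl])
      fix i assume i: "i \<in> {..<k}"
      have "(\<Sum>v\<in>nbhd (V i) (E i) (x i). int (F (x(i:=v))))
          = (\<Sum>v\<in>nbhd (V i) (E i) (x i). (int (F x) - int (M i) * int (f i (x i))) + int (M i) * int (f i v))"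
        using Fupd i by (auto intro!: sum.cong simp: algebra_simps)
      also have "\<dots> = int (card (nbhd (V i) (E i) (x i))) * (int (F x) - int (M i) * int (f i (x i)))
           + int (M i) * (\<Sum>v\<in>nbhd (V i) (E i) (x i). int (f i v))"
        by (simp add: sum.distrib sum_distrib_left)
      also have "\<dots> = int (r i) * int (F x) + int (M i) * (int (S i (x i)) - int (r i) * int (f i (x i)))"
        using cardN[OF _ Pi[OF x]] i unfolding S_def by (simp add: algebra_simps)
      finally show "(\<Sum>v\<in>nbhd (V i) (E i) (x i). int (F (x(i:=v)))) = int (r i) * int (F x) + int (M i) * (int (S i (x i)) - int (r i) * int (f i (x i)))" .
    qed
    also have "\<dots> = int R * int (F x) + (\<Sum>i<k. int (M i) * (int (S i (x i)) - int (r i) * int (f i (x i))))"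
      unfolding R_def by (simp add: sum.distrib sum_distrib_right)
    also have "int R * int (F x) = (\<Sum>i<k. int (M i) * (int R * int (f i (x i))))"
      unfolding F_def by (simp add: sum_distrib_left algebra_simps)
    also have "(\<Sum>i<k. int (M i) * (int R * int (f i (x i)))) + (\<Sum>i<k. int (M i) * (int (S i (x i)) - int (r i) * int (f i (x i))))
        = (\<Sum>i<k. int (M i) * h i (x i))"
      unfolding h_def by (simp add: sum.distrib[symmetric] algebra_simps)
    finally show ?thesis .
  qed
  have hmod: "int (n i) dvd h i v - int R * int (f i v)" if "i < k" "v \<in> V i" for i v
  proof -
    have "S i v mod n i = (r i * f i v) mod n i"
      using f[OF that(1)] that(2) unfolding balanced_labelling_def S_def n_def by auto
    then have "int (S i v) mod int (n i) = int (r i * f i v) mod int (n i)"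
      by (metis of_nat_mod)
    then have "int (n i) dvd int (S i v) - int (r i) * int (f i v)"
      by (simp add: mod_eq_dvd_iff)
    then show ?thesis unfolding h_def by (simp add: algebra_simps)
  qed
  have copi: "coprime (int R) (int (n i))" if "i < k" for i
  proof -
    have "n i dvd (\<Prod>j<k. n j)" using that by (auto intro: dvd_prodI)
    then have "coprime R (n i)"
      using cop unfolding R_def n_def by (meson coprime_divisors dvd_refl)
    then show ?thesis by simp
  qed
  have Winj: "inj_on (\<lambda>x. (\<Sum>y\<in>nbhd P CE x. F y) mod card P) P"
  proof (rule inj_onI)
    fix x y assume xy: "x \<in> P" "y \<in> P"
      and eq: "(\<Sum>y\<in>nbhd P CE x. F y) mod card P = (\<Sum>z\<in>nbhd P CE y. F z) mod card P"
    have "int (\<Sum>y\<in>nbhd P CE x. F y) mod int (card P) = int (\<Sum>z\<in>nbhd P CE y. F z) mod int (card P)"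
      using eq by (metis of_nat_mod)
    then have d0: "int (M k) dvd (\<Sum>i<k. int (M i) * h i (x i)) - (\<Sum>i<k. int (M i) * h i (y i))"
      using W[OF xy(1)] W[OF xy(2)] cardP by (simp add: mod_eq_dvd_iff)
    have key: "int (n i) dvd h i (x i) - h i (y i) \<Longrightarrow> int (n i) dvd int (f i (x i)) - int (f i (y i))"
      if i: "i < k" for i
    proof -
      assume a: "int (n i) dvd h i (x i) - h i (y i)"
      have "h i (x i) - h i (y i) = (h i (x i) - int R * int (f i (x i))) - (h i (y i) - int R * int (f i (y i)))
            + int R * (int (f i (x i)) - int (f i (y i)))" by (simp add: algebra_simps)
      then have "int (n i) dvd int R * (int (f i (x i)) - int (f i (y i)))"
        using a hmod[OF i Pi[OF xy(1) i]] hmod[OF i Pi[OF xy(2) i]]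
        by (metis dvd_add_right_iff dvd_diff)
      then show ?thesis using copi[OF i] coprime_dvd_mult_right_iff coprime_commute by metis
    qed
    have "\<forall>i<k. int (n i) dvd h i (x i) - h i (y i)"
    proof (rule digits)
      show "\<forall>i<k. 0 < n i" using npos by auto
      show "\<forall>i<k. int (n i) dvd h i (x i) - h i (y i) \<longrightarrow> h i (x i) = h i (y i)"
      proof (intro allI impI)
        fix i assume i: "i < k" and a: "int (n i) dvd h i (x i) - h i (y i)"
        have "f i (x i) = f i (y i)"
          using small_eq[OF flt[OF i Pi[OF xy(1) i]] flt[OF i Pi[OF xy(2) i]] key[OF i a]] .
        then have "x i = y i" using finj[OF i] Pi[OF xy(1) i] Pi[OF xy(2) i] by (auto dest: inj_onD)
        then show "h i (x i) = h i (y i)" by simp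
      qed
      show "int (\<Prod>j<k. n j) dvd (\<Sum>i<k. int (\<Prod>j<i. n j) * h i (x i)) - (\<Sum>i<k. int (\<Prod>j<i. n j) * h i (y i))"
        using d0 unfolding M_def .
    qed
    then show "x = y" using coord xy key by auto
  qed
  have "distance_antimagic_labelling P CE F"
    unfolding distance_antimagic_labelling_def using Fbij Winj by blast
  then show ?thesis unfolding Zn_distance_antimagic_def P_def CE_def by blast
qed

end
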